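(* Let $\mathcal{S}$ be a finite elation generalized quadrangle of order $(s,t)$ with elation group $G$ and associated $4$-gonal family $(G,\{A_i\}_{i=0}^t,\{A_i^*\}_{i=0}^t)$. If $s$ does not divide $t$, then $A_i^*G'=A_iG'$ for each $i\in\{0,\dots,t\}$.
   Context: A generalized quadrangle of order $(s,t)$: each line has $s+1$ points, each point is on $t+1$ lines, and for each non-incident point-line pair $(P,\ell)$ there is a unique point on $\ell$ collinear with $P$. An elation about $P$ is an automorphism that is the identity or fixes each line through $P$ and no point not collinear with $P$. $\mathcal{S}$ is an elation generalized quadrangle with base point $P$ and elation group $G$ if $G$ consists of elations about $P$ and acts regularly on the points not collinear with $P$. The associated $4$-gonal family: fix a point $y$ not collinear with $P$, let $M_0,\dots,M_t$ be the lines through $y$, let $z_i$ be the unique point of $M_i$ collinear with $P$, and let $A_i$, $A_i^*$ be the stabilizers in $G$ of $M_i$ and $z_i$ respectively. $G'$ is the derived subgroup of $G$. *)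

theory Defs
  imports "HOL-Algebra.Algebra"
begin

text \<open>A (finite) incidence structure is given by a point set P and a set L of lines,
  each line being represented by the set of points incident with it.\<close>

definition collinear :: "'p set set \<Rightarrow> 'p \<Rightarrow> 'p \<Rightarrow> bool" where
  "collinear L x y \<longleftrightarrow> (\<exists>l\<in>L. x \<in> l \<and> y \<in> l)"

definition is_GQ :: "'p set \<Rightarrow> 'p set set \<Rightarrow> nat \<Rightarrow> nat \<Rightarrow> bool" where
  "is_GQ P L s t \<longleftrightarrow>
     finite P \<and> s \<ge> 1 \<and> t \<ge> 1 \<and>
     (\<forall>l\<in>L. l \<subseteq> P \<and> card l = s + 1) \<and>
     (\<forall>x\<in>P. card {l\<in>L. x \<in> l} = t + 1) \<and>
     (\<forall>x\<in>P. \<forall>y\<in>P. x \<noteq> y \<longrightarrow> card {l\<in>L. x \<in> l \<and> y \<in> l} \<le> 1) \<and>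
     (\<forall>x\<in>P. \<forall>l\<in>L. x \<notin> l \<longrightarrow> (\<exists>!z. z \<in> l \<and> collinear L x z))"

definition GQ_aut :: "'p set \<Rightarrow> 'p set set \<Rightarrow> ('p \<Rightarrow> 'p) \<Rightarrow> bool" where
  "GQ_aut P L g \<longleftrightarrow> g \<in> Bij P \<and> (\<lambda>l. g ` l) ` L = L"

definition elation :: "'p set \<Rightarrow> 'p set set \<Rightarrow> 'p \<Rightarrow> ('p \<Rightarrow> 'p) \<Rightarrow> bool" where
  "elation P L p g \<longleftrightarrow> GQ_aut P L g \<and>
     (g = (\<lambda>x\<in>P. x) \<or>
      ((\<forall>l\<in>L. p \<in> l \<longrightarrow> g ` l = l) \<and>
       (\<forall>x\<in>P. \<not> collinear L p x \<longrightarrow> g x \<noteq> x)))"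

definition is_EGQ :: "'p set \<Rightarrow> 'p set set \<Rightarrow> nat \<Rightarrow> nat \<Rightarrow> 'p \<Rightarrow> ('p \<Rightarrow> 'p) set \<Rightarrow> bool" where
  "is_EGQ P L s t p G \<longleftrightarrow>
     is_GQ P L s t \<and> p \<in> P \<and>
     subgroup G (BijGroup P) \<and>
     (\<forall>g\<in>G. elation P L p g) \<and>
     (\<forall>x\<in>P. \<forall>y\<in>P. \<not> collinear L p x \<longrightarrow> \<not> collinear L p y \<longrightarrow> (\<exists>!g. g \<in> G \<and> g x = y))"

end

theory Submission
  imports Defs
begin

context group begin

lemma cancel1: "x \<in> carrier G \<Longrightarrow> y \<in> carrier G \<Longrightarrow> x \<otimes> (inv x \<otimes> y) = y"
  by (simp add: m_assoc[symmetric])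
lemma cancel2: "x \<in> carrier G \<Longrightarrow> y \<in> carrier G \<Longrightarrow> inv x \<otimes> (x \<otimes> y) = y"
  by (simp add: m_assoc[symmetric])
lemma cancel3: "x \<in> carrier G \<Longrightarrow> y \<in> carrier G \<Longrightarrow> y \<otimes> inv x \<otimes> x = y"
  by (simp add: m_assoc)
lemma cancel4: "x \<in> carrier G \<Longrightarrow> y \<in> carrier G \<Longrightarrow> y \<otimes> x \<otimes> inv x = y"
  by (simp add: m_assoc)

lemma fc_inj:
  assumes "a \<in> carrier G" "b \<in> carrier G" "u0 \<in> carrier G"
    and "(u0 \<otimes> a, inv a \<otimes> h0) = (u0 \<otimes> b, inv b \<otimes> h0)"
  shows "a = b"
proof -
  have "u0 \<otimes> a = u0 \<otimes> b" using assms(4) by simp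
  then show ?thesis using l_cancel[OF _ assms(1,2,3)] by blast
qed

lemma fc_into:
  assumes U: "subgroup U G" and H: "subgroup H G" and u0: "u0 \<in> U" and h0: "h0 \<in> H"
    and v: "v \<in> U \<inter> H"
  shows "u0 \<otimes> v \<in> U \<and> inv v \<otimes> h0 \<in> H \<and> (u0 \<otimes> v) \<otimes> (inv v \<otimes> h0) = u0 \<otimes> h0"
proof -
  have vc: "v \<in> carrier G" using v subgroup.mem_carrier[OF U] by blast
  have u0c: "u0 \<in> carrier G" using u0 subgroup.mem_carrier[OF U] by blast
  have h0c: "h0 \<in> carrier G" using h0 subgroup.mem_carrier[OF H] by blast
  have 1: "u0 \<otimes> v \<in> U" using v u0 subgroup.m_closed[OF U] by blast
  have 2: "inv v \<otimes> h0 \<in> H" using v h0 subgroup.m_closed[OF H] subgroup.m_inv_closed[OF H] by blast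
  have "(u0 \<otimes> v) \<otimes> (inv v \<otimes> h0) = u0 \<otimes> (v \<otimes> (inv v \<otimes> h0))"
    using vc u0c h0c by (simp add: m_assoc)
  also have "\<dots> = u0 \<otimes> h0" using cancel1[OF vc h0c] by simp
  finally show ?thesis using 1 2 by blast
qed

lemma fc_onto:
  assumes U: "subgroup U G" and H: "subgroup H G" and u0: "u0 \<in> U" and h0: "h0 \<in> H"
    and u: "u \<in> U" and h: "h \<in> H" and eq: "u \<otimes> h = u0 \<otimes> h0"
  shows "\<exists>v\<in>U \<inter> H. u = u0 \<otimes> v \<and> h = inv v \<otimes> h0"
proof -
  have uc: "u \<in> carrier G" using u subgroup.mem_carrier[OF U] by blast
  have u0c: "u0 \<in> carrier G" using u0 subgroup.mem_carrier[OF U] by blast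
  have hc: "h \<in> carrier G" using h subgroup.mem_carrier[OF H] by blast
  have h0c: "h0 \<in> carrier G" using h0 subgroup.mem_carrier[OF H] by blast
  define v where "v = inv u0 \<otimes> u"
  have vc: "v \<in> carrier G" unfolding v_def using uc u0c by simp
  have vU: "v \<in> U" unfolding v_def using u0 u subgroup.m_closed[OF U] subgroup.m_inv_closed[OF U] by blast
  have e1: "inv u0 \<otimes> (u \<otimes> h) \<otimes> inv h = v"
  proof -
    have "inv u0 \<otimes> (u \<otimes> h) \<otimes> inv h = inv u0 \<otimes> (u \<otimes> (h \<otimes> inv h))"
      using uc hc u0c by (simp add: m_assoc)
    also have "\<dots> = v" unfolding v_def using uc hc u0c by simp
    finally show ?thesis .
  qed
  have e2: "inv u0 \<otimes> (u0 \<otimes> h0) \<otimes> inv h = h0 \<otimes> inv h"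
    using cancel2[OF u0c h0c] by simp
  have vh: "v = h0 \<otimes> inv h" using e1 e2 eq by simp
  have vH: "v \<in> H" unfolding vh using h0 h subgroup.m_closed[OF H] subgroup.m_inv_closed[OF H] by blast
  have 1: "u = u0 \<otimes> v" unfolding v_def using cancel1[OF u0c uc] by simp
  have "inv v \<otimes> h0 = (h \<otimes> inv h0) \<otimes> h0" unfolding vh using hc h0c by (simp add: inv_mult_group)
  also have "\<dots> = h" using cancel3[OF h0c hc] .
  finally have 2: "h = inv v \<otimes> h0" by simp
  show ?thesis using vU vH 1 2 by blast
qed

lemma fiber_card:
  assumes U: "subgroup U G" and H: "subgroup H G" and u0: "u0 \<in> U" and h0: "h0 \<in> H"
  shows "card {(u,h). u \<in> U \<and> h \<in> H \<and> u \<otimes> h = u0 \<otimes> h0} = card (U \<inter> H)"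
proof -
  have u0c: "u0 \<in> carrier G" using u0 subgroup.mem_carrier[OF U] by blast
  let ?f = "\<lambda>v. (u0 \<otimes> v, inv v \<otimes> h0)"
  have "bij_betw ?f (U \<inter> H) {(u,h). u \<in> U \<and> h \<in> H \<and> u \<otimes> h = u0 \<otimes> h0}"
  proof (rule bij_betw_imageI)
    show "inj_on ?f (U \<inter> H)"
    proof (rule inj_onI)
      fix a b assume "a \<in> U \<inter> H" "b \<in> U \<inter> H" "?f a = ?f b"
      then show "a = b" using fc_inj[OF _ _ u0c] subgroup.mem_carrier[OF U] by blast
    qed
    show "?f ` (U \<inter> H) = {(u,h). u \<in> U \<and> h \<in> H \<and> u \<otimes> h = u0 \<otimes> h0}"
    proof
      show "?f ` (U \<inter> H) \<subseteq> {(u,h). u \<in> U \<and> h \<in> H \<and> u \<otimes> h = u0 \<otimes> h0}"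
        using fc_into[OF U H u0 h0] by blast
      show "{(u,h). u \<in> U \<and> h \<in> H \<and> u \<otimes> h = u0 \<otimes> h0} \<subseteq> ?f ` (U \<inter> H)"
      proof
        fix w assume "w \<in> {(u,h). u \<in> U \<and> h \<in> H \<and> u \<otimes> h = u0 \<otimes> h0}"
        then obtain u h where w: "w = (u,h)" "u \<in> U" "h \<in> H" "u \<otimes> h = u0 \<otimes> h0" by blast
        obtain v where "v \<in> U \<inter> H" "u = u0 \<otimes> v" "h = inv v \<otimes> h0"
          using fc_onto[OF U H u0 h0 w(2,3,4)] by blast
        then show "w \<in> ?f ` (U \<inter> H)" using w(1) by blast
      qed
    qed
  qed
  from bij_betw_same_card[OF this] show ?thesis by (rule sym)
qed

lemma prod_card:
  assumes U: "subgroup U G" and H: "subgroup H G" and fU: "finite U" and fH: "finite H"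
  shows "card U * card H = card (U \<inter> H) * card (U <#> H)"
proof -
  define F where "F k = {(u,h). u \<in> U \<and> h \<in> H \<and> u \<otimes> h = k}" for k
  have eq: "U \<times> H = (\<Union>k\<in>U <#> H. F k)"
    unfolding F_def set_mult_def by auto
  have fin: "finite (U <#> H)" unfolding set_mult_def using fU fH by auto
  have "card (U \<times> H) = (\<Sum>k\<in>U <#> H. card (F k))"
  proof -
    have finF: "\<forall>k\<in>U <#> H. finite (F k)"
    proof
      fix k have "F k \<subseteq> U \<times> H" unfolding F_def by auto
      then show "finite (F k)" using finite_cartesian_product[OF fU fH] finite_subset by blast
    qed
    have disj: "\<forall>i\<in>U <#> H. \<forall>j\<in>U <#> H. i \<noteq> j \<longrightarrow> F i \<inter> F j = {}"
      unfolding F_def by blast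
    show ?thesis unfolding eq by (rule card_UN_disjoint[OF fin finF disj])
  qed
  also have "\<dots> = (\<Sum>k\<in>U <#> H. card (U \<inter> H))"
  proof (rule sum.cong[OF refl])
    fix k assume "k \<in> U <#> H"
    then obtain u0 h0 where "u0 \<in> U" "h0 \<in> H" "k = u0 \<otimes> h0" unfolding set_mult_def by auto
    then show "card (F k) = card (U \<inter> H)" unfolding F_def using fiber_card[OF U H] by simp
  qed
  finally have "card U * card H = card (U <#> H) * card (U \<inter> H)"
    by (simp add: card_cartesian_product)
  then show ?thesis by (simp only: mult.commute)
qed

lemma alg_mult:
  assumes "x1 \<in> carrier G" "h1 \<in> carrier G" "x2 \<in> carrier G" "h2 \<in> carrier G"
  shows "x1 \<otimes> h1 \<otimes> (x2 \<otimes> h2) = x1 \<otimes> x2 \<otimes> (inv x2 \<otimes> h1 \<otimes> x2 \<otimes> h2)"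
  using assms by (simp add: m_assoc cancel1)

lemma alg_inv:
  assumes "x \<in> carrier G" "h \<in> carrier G"
  shows "inv (x \<otimes> h) = inv x \<otimes> (x \<otimes> inv h \<otimes> inv x)"
  using assms by (simp add: m_assoc cancel2 inv_mult_group)

lemma set_mult_sub_closed:
  assumes K: "subgroup K G" and "S1 \<subseteq> K" "S2 \<subseteq> K" shows "S1 <#> S2 \<subseteq> K"
  using assms subgroup.m_closed[OF K] unfolding set_mult_def by blast

lemma dedekind_count:
  assumes Q: "subgroup Q G" and H: "subgroup H G" and K: "subgroup K G"
    and HK: "H \<subseteq> K" and KXH: "K \<subseteq> Q <#> H" and fK: "finite K"
  shows "card (Q \<inter> K) * card H = card (Q \<inter> H) * card K"
proof -
  have U: "subgroup (Q \<inter> K) G" by (rule subgroups_Inter_pair[OF Q K])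
  have fH: "finite H" using fK HK finite_subset by blast
  have fU: "finite (Q \<inter> K)" using fK by simp
  have UH: "Q \<inter> K \<inter> H = Q \<inter> H" using HK by blast
  have eq: "(Q \<inter> K) <#> H = K"
  proof
    show "(Q \<inter> K) <#> H \<subseteq> K" using set_mult_sub_closed[OF K] HK by blast
    show "K \<subseteq> (Q \<inter> K) <#> H"
    proof
      fix k assume k: "k \<in> K"
      then obtain x h where xh: "x \<in> Q" "h \<in> H" "k = x \<otimes> h" using KXH unfolding set_mult_def by blast
      have xc: "x \<in> carrier G" using xh(1) subgroup.mem_carrier[OF Q] by blast
      have hc: "h \<in> carrier G" using xh(2) subgroup.mem_carrier[OF H] by blast
      have "x = k \<otimes> inv h" using xh(3) cancel4[OF hc xc] by simp
      moreover have "k \<otimes> inv h \<in> K"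
        using k xh(2) HK subgroup.m_closed[OF K] subgroup.m_inv_closed[OF H] by blast
      ultimately have "x \<in> Q \<inter> K" using xh(1) by simp
      then show "k \<in> (Q \<inter> K) <#> H" using xh(2,3) unfolding set_mult_def by blast
    qed
  qed
  show ?thesis using prod_card[OF U H fU fH] unfolding UH eq .
qed

end

locale egq_setup =
  fixes P :: "'p set" and L :: "'p set set" and s t :: nat
    and p :: 'p and G :: "('p \<Rightarrow> 'p) set" and y :: 'p and M :: "'p set" and z :: 'p
  assumes egq: "is_EGQ P L s t p G"
    and y: "y \<in> P" "\<not> collinear L p y"
    and M: "M \<in> L" "y \<in> M"
    and z: "z \<in> M" "collinear L p z"
begin

abbreviation "BG \<equiv> BijGroup P"

definition Opts where "Opts = {x\<in>P. \<not> collinear L p x}"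
definition AN where "AN N = {g\<in>G. g ` N = N}"
definition Ast where "Ast = {g\<in>G. g z = z}"
definition LY where "LY = {N\<in>L. y \<in> N \<and> N \<noteq> M}"

lemma finP: "finite P" and s1: "s \<ge> 1" and t1: "t \<ge> 1"
  and lines: "\<And>l. l\<in>L \<Longrightarrow> l \<subseteq> P \<and> card l = s + 1"
  and deg: "\<And>x. x\<in>P \<Longrightarrow> card {l\<in>L. x \<in> l} = t + 1"
  and uniq2: "\<And>x w. x\<in>P \<Longrightarrow> w\<in>P \<Longrightarrow> x \<noteq> w \<Longrightarrow> card {l\<in>L. x \<in> l \<and> w \<in> l} \<le> 1"
  and gq: "\<And>x l. x\<in>P \<Longrightarrow> l\<in>L \<Longrightarrow> x \<notin> l \<Longrightarrow> (\<exists>!w. w \<in> l \<and> collinear L x w)"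
  and pP: "p \<in> P" and sub: "subgroup G BG"
  and el: "\<And>g. g\<in>G \<Longrightarrow> elation P L p g"
  and reg: "\<And>x w. x\<in>P \<Longrightarrow> w\<in>P \<Longrightarrow> \<not> collinear L p x \<Longrightarrow> \<not> collinear L p w \<Longrightarrow> (\<exists>!g. g \<in> G \<and> g x = w)"
  using egq unfolding is_EGQ_def is_GQ_def by auto

lemma grp: "group BG" by (rule group_BijGroup)
lemma mon: "monoid BG" using grp by (rule group.is_monoid)

lemma G_Bij: "g \<in> G \<Longrightarrow> g \<in> Bij P"
  using subgroup.subset[OF sub] by (auto simp: BijGroup_def)

lemma carrier_BG: "carrier BG = Bij P" by (simp add: BijGroup_def)

lemma mult_app: "g \<in> Bij P \<Longrightarrow> h \<in> Bij P \<Longrightarrow> x \<in> P \<Longrightarrow> (g \<otimes>\<^bsub>BG\<^esub> h) x = g (h x)"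
  by (simp add: BijGroup_def compose_def)

lemma one_app: "x \<in> P \<Longrightarrow> \<one>\<^bsub>BG\<^esub> x = x"
  by (simp add: BijGroup_def)

lemma Bij_P: "g \<in> Bij P \<Longrightarrow> x \<in> P \<Longrightarrow> g x \<in> P"
  using Bij_imp_funcset by blast

lemma inv_Bij: "g \<in> Bij P \<Longrightarrow> inv\<^bsub>BG\<^esub> g \<in> Bij P"
  using group.inv_closed[OF grp] carrier_BG by auto

lemma inv_app1: "g \<in> Bij P \<Longrightarrow> x \<in> P \<Longrightarrow> (inv\<^bsub>BG\<^esub> g) (g x) = x"
proof -
  assume g: "g \<in> Bij P" and x: "x \<in> P"
  have "(inv\<^bsub>BG\<^esub> g \<otimes>\<^bsub>BG\<^esub> g) x = \<one>\<^bsub>BG\<^esub> x"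
    using group.l_inv[OF grp, of g] g carrier_BG by simp
  then show ?thesis using mult_app[OF inv_Bij[OF g] g x] one_app[OF x] by simp
qed

lemma inv_app2: "g \<in> Bij P \<Longrightarrow> x \<in> P \<Longrightarrow> g ((inv\<^bsub>BG\<^esub> g) x) = x"
proof -
  assume g: "g \<in> Bij P" and x: "x \<in> P"
  have "(g \<otimes>\<^bsub>BG\<^esub> inv\<^bsub>BG\<^esub> g) x = \<one>\<^bsub>BG\<^esub> x"
    using group.r_inv[OF grp, of g] g carrier_BG by simp
  then show ?thesis using mult_app[OF g inv_Bij[OF g] x] one_app[OF x] by simp
qed

lemma G_inv: "g \<in> G \<Longrightarrow> inv\<^bsub>BG\<^esub> g \<in> G"
  using subgroup.m_inv_closed[OF sub] by blast
lemma G_mult: "g \<in> G \<Longrightarrow> h \<in> G \<Longrightarrow> g \<otimes>\<^bsub>BG\<^esub> h \<in> G"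
  using subgroup.m_closed[OF sub] by blast
lemma G_one: "\<one>\<^bsub>BG\<^esub> \<in> G"
  using subgroup.one_closed[OF sub] by blast

lemma L_sub: "l \<in> L \<Longrightarrow> l \<subseteq> P" using lines by blast

lemma finL: "finite L"
proof -
  have "L \<subseteq> Pow P" using L_sub by blast
  moreover have "finite (Pow P)" using finP by simp
  ultimately show ?thesis by (rule finite_subset)
qed

lemma two_lines:
  assumes "l1 \<in> L" "l2 \<in> L" "a \<noteq> b" "a \<in> l1" "b \<in> l1" "a \<in> l2" "b \<in> l2"
  shows "l1 = l2"
proof (rule ccontr)
  assume ne: "l1 \<noteq> l2"
  have ab: "a \<in> P" "b \<in> P" using assms L_sub by auto
  have "{l1, l2} \<subseteq> {l\<in>L. a \<in> l \<and> b \<in> l}" using assms by auto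
  moreover have "finite {l\<in>L. a \<in> l \<and> b \<in> l}" using finL by auto
  ultimately have "card {l1, l2} \<le> card {l\<in>L. a \<in> l \<and> b \<in> l}" by (rule card_mono[rotated])
  then have "2 \<le> card {l\<in>L. a \<in> l \<and> b \<in> l}" using ne by simp
  then show False using uniq2[OF ab assms(3)] by simp
qed

lemma gq_uniq:
  assumes "l \<in> L" "x \<in> P" "x \<notin> l" "a \<in> l" "b \<in> l" "collinear L x a" "collinear L x b"
  shows "a = b"
  using gq[OF assms(2,1,3)] assms(4-7) by blast

lemma gq_ex: assumes "x \<in> P" "l \<in> L" "x \<notin> l" shows "\<exists>w. w \<in> l \<and> collinear L x w"
proof -
  have "\<exists>!w. w \<in> l \<and> collinear L x w" by (rule gq[OF assms])
  then show ?thesis by auto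
qed

lemma coll_sym: "collinear L a b \<Longrightarrow> collinear L b a"
  unfolding collinear_def by blast

lemma coll_line: "l \<in> L \<Longrightarrow> a \<in> l \<Longrightarrow> b \<in> l \<Longrightarrow> collinear L a b"
  unfolding collinear_def by blast

lemma G_line: "g \<in> G \<Longrightarrow> l \<in> L \<Longrightarrow> g ` l \<in> L"
  using el unfolding elation_def GQ_aut_def by blast

lemma G_fix_p_line: "g \<in> G \<Longrightarrow> l \<in> L \<Longrightarrow> p \<in> l \<Longrightarrow> g ` l = l"
proof -
  assume g: "g \<in> G" and l: "l \<in> L" "p \<in> l"
  have "g = (\<lambda>x\<in>P. x) \<or> (\<forall>l\<in>L. p \<in> l \<longrightarrow> g ` l = l)"
    using el[OF g] unfolding elation_def by blast
  then show ?thesis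
  proof
    assume "g = (\<lambda>x\<in>P. x)"
    then show ?thesis using L_sub[OF l(1)] by auto
  qed (use l in blast)
qed

lemma line_coll_p: "l \<in> L \<Longrightarrow> p \<in> l \<Longrightarrow> x \<in> l \<Longrightarrow> collinear L p x"
  by (rule coll_line)

lemma Opts_img: assumes g: "g \<in> G" and x: "x \<in> Opts" shows "g x \<in> Opts"
proof -
  have xP: "x \<in> P" and nx: "\<not> collinear L p x" using x unfolding Opts_def by auto
  have gx: "g x \<in> P" using Bij_P[OF G_Bij[OF g] xP] .
  have "\<not> collinear L p (g x)"
  proof
    assume "collinear L p (g x)"
    then obtain l where l: "l \<in> L" "p \<in> l" "g x \<in> l" unfolding collinear_def by blast
    have "(inv\<^bsub>BG\<^esub> g) ` l = l" using G_fix_p_line[OF G_inv[OF g] l(1,2)] .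
    then have "(inv\<^bsub>BG\<^esub> g) (g x) \<in> l" using l(3) by blast
    then have "x \<in> l" using inv_app1[OF G_Bij[OF g] xP] by simp
    then show False using nx l coll_line by blast
  qed
  then show ?thesis using gx unfolding Opts_def by auto
qed

lemma y_Opts: "y \<in> Opts" using y unfolding Opts_def by auto

lemma ex1_uniq: assumes "\<exists>!x. Q x" "Q a" "Q b" shows "a = b"
  using assms by auto

lemma reg_one: assumes b: "b \<in> G" "b y = y" shows "b = \<one>\<^bsub>BG\<^esub>"
proof -
  have "\<exists>!g. g \<in> G \<and> g y = y" using reg[OF y(1) y(1) y(2) y(2)] .
  moreover have "\<one>\<^bsub>BG\<^esub> y = y" using one_app[OF y(1)] .
  ultimately show ?thesis using ex1_uniq[of "\<lambda>g. g \<in> G \<and> g y = y" b "\<one>\<^bsub>BG\<^esub>"] b G_one by blast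
qed

lemma reg_inj: assumes "b1 \<in> G" "b2 \<in> G" "b1 y = b2 y" shows "b1 = b2"
proof -
  have w: "b1 y \<in> Opts" using Opts_img[OF assms(1) y_Opts] .
  then have wP: "b1 y \<in> P" and wn: "\<not> collinear L p (b1 y)" unfolding Opts_def by auto
  have "\<exists>!g. g \<in> G \<and> g y = b1 y" by (rule reg[OF y(1) wP y(2) wn])
  then show ?thesis
  proof (rule ex1_uniq)
    show "b1 \<in> G \<and> b1 y = b1 y" using assms(1) by simp
    show "b2 \<in> G \<and> b2 y = b1 y" using assms(2) assms(3)[symmetric] by simp
  qed
qed

lemma reg_ex: assumes "w \<in> Opts" shows "\<exists>b\<in>G. b y = w"
proof -
  have wP: "w \<in> P" and wn: "\<not> collinear L p w" using assms unfolding Opts_def by auto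
  have "\<exists>!g. g \<in> G \<and> g y = w" by (rule reg[OF y(1) wP y(2) wn])
  then show ?thesis by auto
qed

lemma finG: "finite G"
proof -
  have inj: "inj_on (\<lambda>g. g y) G" using reg_inj by (intro inj_onI)
  have "(\<lambda>g. g y) ` G \<subseteq> P"
  proof
    fix x assume "x \<in> (\<lambda>g. g y) ` G"
    then obtain g where g: "g \<in> G" "x = g y" by blast
    then show "x \<in> P" using Bij_P[OF G_Bij[OF g(1)] y(1)] by simp
  qed
  then have "finite ((\<lambda>g. g y) ` G)" using finP by (rule finite_subset)
  then show ?thesis using inj by (rule finite_imageD)
qed

lemma p_notin: "N \<in> L \<Longrightarrow> y \<in> N \<Longrightarrow> p \<notin> N"
  using y(2) coll_line by blast

lemma zP: "z \<in> P" using z M L_sub by auto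

lemma y_ne_z: "y \<noteq> z" using y z by auto

lemma card_line_Opts: assumes N: "N \<in> L" "p \<notin> N" shows "card (N \<inter> Opts) = s"
proof -
  obtain w where w: "w \<in> N" "collinear L p w" using gq_ex[OF pP N(1) N(2)] by blast
  have wu: "v = w" if "v \<in> N" "collinear L p v" for v
    using gq_uniq[OF N(1) pP N(2) that(1) w(1) that(2) w(2)] .
  have "N \<inter> Opts = N - {w}"
  proof
    show "N \<inter> Opts \<subseteq> N - {w}" using w(2) unfolding Opts_def by auto
    show "N - {w} \<subseteq> N \<inter> Opts"
    proof
      fix v assume v: "v \<in> N - {w}"
      then have "\<not> collinear L p v" using wu by blast
      moreover have "v \<in> P" using v L_sub[OF N(1)] by blast
      ultimately show "v \<in> N \<inter> Opts" using v unfolding Opts_def by blast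
    qed
  qed
  moreover have "card N = s + 1" using lines N by auto
  moreover have "finite N" using L_sub[OF N(1)] finP by (simp add: finite_subset)
  ultimately show ?thesis using w by simp
qed

lemma T: assumes N: "N \<in> L" "y \<in> N" and b: "b \<in> G" "b y \<in> N" shows "b ` N = N"
proof -
  have pN: "p \<notin> N" using p_notin[OF N] .
  obtain w where w: "w \<in> N" "collinear L p w" using gq_ex[OF pP N(1) pN] by blast
  obtain l where l: "l \<in> L" "p \<in> l" "w \<in> l" using w(2) unfolding collinear_def by blast
  have bl: "b ` l = l" using G_fix_p_line[OF b(1) l(1,2)] .
  have bw: "b w \<in> l" using bl l(3) by blast
  have bN: "b ` N \<in> L" using G_line[OF b(1) N(1)] .
  have byO: "b y \<in> Opts" using Opts_img[OF b(1) y_Opts] .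
  have byP: "b y \<in> P" and nby: "\<not> collinear L p (b y)" using byO unfolding Opts_def by auto
  have byl: "b y \<notin> l" using nby l coll_line by blast
  have c1: "collinear L (b y) w" using coll_line[OF N(1) b(2) w(1)] .
  have c2: "collinear L (b y) (b w)" using coll_line[OF bN] N(2) w(1) by blast
  have "w = b w" using gq_uniq[OF l(1) byP byl l(3) bw c1 c2] .
  have ne: "b y \<noteq> w" using nby w(2) by auto
  show ?thesis
  proof (rule two_lines[OF bN N(1) ne])
    show "b y \<in> b ` N" using N(2) by (rule imageI)
    have "b w \<in> b ` N" using w(1) by (rule imageI)
    then show "w \<in> b ` N" using \<open>w = b w\<close> by metis
  qed (use b(2) w(1) in blast)+
qed

lemma AN_char: "N \<in> L \<Longrightarrow> y \<in> N \<Longrightarrow> AN N = {b\<in>G. b y \<in> N}"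
  unfolding AN_def using T by blast

lemma card_AN: assumes N: "N \<in> L" "y \<in> N" shows "card (AN N) = s"
proof -
  have "bij_betw (\<lambda>b. b y) (AN N) (N \<inter> Opts)"
  proof (rule bij_betw_imageI)
    show "inj_on (\<lambda>b. b y) (AN N)" using reg_inj unfolding AN_def by (auto intro: inj_onI)
    show "(\<lambda>b. b y) ` AN N = N \<inter> Opts"
    proof
      show "(\<lambda>b. b y) ` AN N \<subseteq> N \<inter> Opts"
        using Opts_img[OF _ y_Opts] AN_char[OF N] by auto
      show "N \<inter> Opts \<subseteq> (\<lambda>b. b y) ` AN N"
      proof
        fix w assume "w \<in> N \<inter> Opts"
        then obtain b where "b \<in> G" "b y = w" "w \<in> N" using reg_ex by blast
        then show "w \<in> (\<lambda>b. b y) ` AN N" using AN_char[OF N] by auto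
      qed
    qed
  qed
  then have "card (AN N) = card (N \<inter> Opts)" by (rule bij_betw_same_card)
  then show ?thesis using card_line_Opts[OF N(1) p_notin[OF N]] by simp
qed

lemma Ast_char: assumes b: "b \<in> G" shows "b z = z \<longleftrightarrow> collinear L (b y) z"
proof
  assume "b z = z"
  then show "collinear L (b y) z"
    using coll_line[OF G_line[OF b M(1)]] M(2) z(1) by (metis imageI)
next
  assume c1: "collinear L (b y) z"
  obtain l where l: "l \<in> L" "p \<in> l" "z \<in> l" using z(2) unfolding collinear_def by blast
  have bz: "b z \<in> l" using G_fix_p_line[OF b l(1,2)] l(3) by blast
  have byO: "b y \<in> Opts" using Opts_img[OF b y_Opts] .
  have byP: "b y \<in> P" and nby: "\<not> collinear L p (b y)" using byO unfolding Opts_def by auto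
  have byl: "b y \<notin> l" using nby l coll_line by blast
  have c2: "collinear L (b y) (b z)"
    using coll_line[OF G_line[OF b M(1)]] M(2) z(1) by blast
  show "b z = z" using gq_uniq[OF l(1) byP byl l(3) bz c1 c2] by (rule sym)
qed

lemma A_sub_Ast: "AN M \<subseteq> Ast"
proof
  fix b assume "b \<in> AN M"
  then have b: "b \<in> G" "b y \<in> M" using AN_char[OF M] by auto
  then have "collinear L (b y) z" using coll_line[OF M(1) b(2) z(1)] by simp
  then show "b \<in> Ast" using Ast_char b unfolding Ast_def by auto
qed


lemma img_id_on: "(\<And>x. x \<in> N \<Longrightarrow> f x = x) \<Longrightarrow> f ` N = N"
proof -
  assume h: "\<And>x. x \<in> N \<Longrightarrow> f x = x"
  have "f ` N = id ` N" by (rule image_cong) (simp_all add: h)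
  then show ?thesis by simp
qed

lemma G_carr: "g \<in> G \<Longrightarrow> g \<in> carrier BG" using G_Bij carrier_BG by simp

lemma AN_sub: assumes N: "N \<in> L" shows "subgroup (AN N) BG"
proof (rule group.subgroupI[OF grp])
  show "AN N \<subseteq> carrier BG" using G_Bij carrier_BG unfolding AN_def by auto
  show "AN N \<noteq> {}"
  proof -
    have "\<one>\<^bsub>BG\<^esub> ` N = N" using L_sub[OF N] one_app by (intro img_id_on) blast
    then show ?thesis using G_one unfolding AN_def by auto
  qed
next
  fix a assume a: "a \<in> AN N"
  then have aG: "a \<in> G" and aN: "a ` N = N" unfolding AN_def by auto
  have "(inv\<^bsub>BG\<^esub> a) ` (a ` N) = N"
    unfolding image_image using inv_app1[OF G_Bij[OF aG]] L_sub[OF N] by (intro img_id_on) blast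
  then show "inv\<^bsub>BG\<^esub> a \<in> AN N" using aN G_inv[OF aG] unfolding AN_def by auto
next
  fix a b assume a: "a \<in> AN N" and b: "b \<in> AN N"
  then have aG: "a \<in> G" and aN: "a ` N = N" and bG: "b \<in> G" and bN: "b ` N = N" unfolding AN_def by auto
  have "(a \<otimes>\<^bsub>BG\<^esub> b) ` N = a ` (b ` N)"
    unfolding image_image using mult_app[OF G_Bij[OF aG] G_Bij[OF bG]] L_sub[OF N] by (intro image_cong) blast+
  then show "a \<otimes>\<^bsub>BG\<^esub> b \<in> AN N" using aN bN G_mult[OF aG bG] unfolding AN_def by auto
qed

lemma Ast_sub: "subgroup Ast BG"
proof (rule group.subgroupI[OF grp])
  show "Ast \<subseteq> carrier BG" using G_Bij carrier_BG unfolding Ast_def by auto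
  show "Ast \<noteq> {}" using G_one one_app[OF zP] unfolding Ast_def by auto
next
  fix a assume a: "a \<in> Ast"
  then have aG: "a \<in> G" and az: "a z = z" unfolding Ast_def by auto
  have "(inv\<^bsub>BG\<^esub> a) z = z" using inv_app1[OF G_Bij[OF aG] zP] az by simp
  then show "inv\<^bsub>BG\<^esub> a \<in> Ast" using G_inv[OF aG] unfolding Ast_def by auto
next
  fix a b assume a: "a \<in> Ast" and b: "b \<in> Ast"
  then have aG: "a \<in> G" and az: "a z = z" and bG: "b \<in> G" and bz: "b z = z" unfolding Ast_def by auto
  have "(a \<otimes>\<^bsub>BG\<^esub> b) z = z" using mult_app[OF G_Bij[OF aG] G_Bij[OF bG] zP] az bz by simp
  then show "a \<otimes>\<^bsub>BG\<^esub> b \<in> Ast" using G_mult[OF aG bG] unfolding Ast_def by auto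
qed

lemma AN_G: "AN N \<subseteq> G" unfolding AN_def by auto
lemma Ast_G: "Ast \<subseteq> G" unfolding Ast_def by auto

lemma mult_cancel_l: "a \<in> G \<Longrightarrow> g \<in> G \<Longrightarrow> a \<otimes>\<^bsub>BG\<^esub> (inv\<^bsub>BG\<^esub> a \<otimes>\<^bsub>BG\<^esub> g) = g"
  using group.cancel1[OF grp G_carr G_carr] by blast

lemma in_set_mult: "a \<in> S1 \<Longrightarrow> b \<in> S2 \<Longrightarrow> a \<otimes>\<^bsub>BG\<^esub> b \<in> set_mult BG S1 S2"
  unfolding set_mult_def by auto

lemma cover: assumes g: "g \<in> G" shows "g \<in> Ast \<or> (\<exists>N\<in>LY. g \<in> set_mult BG (AN M) (AN N))"
proof (cases "collinear L (g y) z")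
  case True
  then show ?thesis using Ast_char[OF g] g unfolding Ast_def by auto
next
  case False
  define w where "w = g y"
  have wO: "w \<in> Opts" unfolding w_def using Opts_img[OF g y_Opts] .
  have wP: "w \<in> P" using wO unfolding Opts_def by auto
  have wM: "w \<notin> M" using False coll_line[OF M(1) _ z(1)] unfolding w_def by blast
  obtain m where m: "m \<in> M" "collinear L w m" using gq_ex[OF wP M(1) wM] by blast
  have mz: "m \<noteq> z" using m False unfolding w_def by auto
  have pM: "p \<notin> M" using p_notin[OF M] .
  have mO: "m \<in> Opts"
  proof -
    have "\<not> collinear L p m"
    proof
      assume "collinear L p m"
      then have "z = m" using gq_uniq[OF M(1) pP pM z(1) m(1) z(2)] by blast
      then show False using mz by simp
    qed
    then show ?thesis using m(1) L_sub[OF M(1)] unfolding Opts_def by auto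
  qed
  obtain a where a: "a \<in> G" "a y = m" using reg_ex[OF mO] by blast
  have aA: "a \<in> AN M" using AN_char[OF M] a m by auto
  obtain N' where N': "N' \<in> L" "w \<in> N'" "m \<in> N'" using m(2) unfolding collinear_def by blast
  define ia where "ia = inv\<^bsub>BG\<^esub> a"
  have ia: "ia \<in> G" unfolding ia_def using G_inv[OF a(1)] .
  define N where "N = ia ` N'"
  have NL: "N \<in> L" unfolding N_def using G_line[OF ia N'(1)] .
  have yN: "y \<in> N" unfolding N_def using N'(3) a inv_app1[OF G_Bij[OF a(1)] y(1)] unfolding ia_def by (metis imageI)
  have aN: "a ` N = N'"
    unfolding N_def ia_def image_image using inv_app2[OF G_Bij[OF a(1)]] L_sub[OF N'(1)] by (intro img_id_on) blast
  have NM: "N \<noteq> M"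
  proof
    assume "N = M"
    then have "N' = M" using aN aA unfolding AN_def by auto
    then show False using wM N'(2) by simp
  qed
  define b where "b = ia \<otimes>\<^bsub>BG\<^esub> g"
  have bG: "b \<in> G" unfolding b_def using G_mult[OF ia g] .
  have "b y = ia w" unfolding b_def w_def using mult_app[OF G_Bij[OF ia] G_Bij[OF g] y(1)] .
  then have "b y \<in> N" unfolding N_def using N'(2) by simp
  then have bN: "b \<in> AN N" using AN_char[OF NL yN] bG by auto
  have "a \<otimes>\<^bsub>BG\<^esub> b = g" unfolding b_def ia_def using mult_cancel_l[OF a(1) g] .
  then have "g \<in> set_mult BG (AN M) (AN N)" using in_set_mult[OF aA bN] by simp
  moreover have "N \<in> LY" unfolding LY_def using NL yN NM by auto
  ultimately show ?thesis by blast
qed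

lemma LY_line: "N \<in> LY \<Longrightarrow> N \<in> L" and LY_y: "N \<in> LY \<Longrightarrow> y \<in> N" and LY_M: "N \<in> LY \<Longrightarrow> N \<noteq> M"
  unfolding LY_def by auto

lemma b_one_y: "b \<in> G \<Longrightarrow> b y = y \<Longrightarrow> b = \<one>\<^bsub>BG\<^esub>" by (rule reg_one)

lemma r_one_G: "a \<in> G \<Longrightarrow> a \<otimes>\<^bsub>BG\<^esub> \<one>\<^bsub>BG\<^esub> = a"
  using monoid.r_one[OF mon G_carr] by blast

lemma inter_trivial: assumes N: "N \<in> LY" and b: "b \<in> AN M" "b \<in> AN N" shows "b = \<one>\<^bsub>BG\<^esub>"
proof -
  have bG: "b \<in> G" and bM: "b y \<in> M" and bN: "b y \<in> N"
    using b AN_char[OF M] AN_char[OF LY_line[OF N] LY_y[OF N]] by auto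
  have "b y = y"
  proof (rule ccontr)
    assume "b y \<noteq> y"
    then have "M = N" using two_lines[OF M(1) LY_line[OF N] _ bM M(2) bN LY_y[OF N]] by blast
    then show False using LY_M[OF N] by simp
  qed
  then show ?thesis using reg_one bG by blast
qed

lemma disj3: assumes N: "N \<in> LY" and g: "g \<in> Ast" "g \<in> set_mult BG (AN M) (AN N)" shows "g \<in> AN M"
proof -
  obtain a b where ab: "a \<in> AN M" "b \<in> AN N" "g = a \<otimes>\<^bsub>BG\<^esub> b" using g(2) unfolding set_mult_def by auto
  have aG: "a \<in> G" and bG: "b \<in> G" using ab AN_G by auto
  have "inv\<^bsub>BG\<^esub> a \<otimes>\<^bsub>BG\<^esub> g = b"
    using ab(3) group.cancel2[OF grp G_carr[OF aG] G_carr[OF bG]] by simp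
  moreover have "inv\<^bsub>BG\<^esub> a \<otimes>\<^bsub>BG\<^esub> g \<in> Ast"
    using subgroup.m_closed[OF Ast_sub] subgroup.m_inv_closed[OF Ast_sub] A_sub_Ast ab(1) g(1) by blast
  ultimately have "b \<in> Ast" by simp
  then have c: "collinear L (b y) z" using Ast_char[OF bG] unfolding Ast_def by auto
  have NL: "N \<in> L" and yN: "y \<in> N" using LY_line[OF N] LY_y[OF N] .
  have byN: "b y \<in> N" using AN_char[OF NL yN] ab(2) by auto
  have byP: "b y \<in> P" using byN L_sub[OF NL] by auto
  have "b y = y"
  proof (rule ccontr)
    assume ne: "b y \<noteq> y"
    have "b y \<notin> M"
    proof
      assume "b y \<in> M"
      then have "M = N" using two_lines[OF M(1) NL ne _ M(2) byN yN] by blast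
      then show False using LY_M[OF N] by simp
    qed
    moreover have "collinear L (b y) y" using coll_line[OF NL byN yN] .
    ultimately have "y = z" using gq_uniq[OF M(1) byP _ M(2) z(1) _ c] by blast
    then show False using y_ne_z by simp
  qed
  then have "b = \<one>\<^bsub>BG\<^esub>" using reg_one bG by blast
  then show ?thesis using ab r_one_G[OF aG] by simp
qed

lemma disj4: assumes N: "N \<in> LY" and N': "N' \<in> LY" and ne: "N \<noteq> N'"
  and g: "g \<in> set_mult BG (AN M) (AN N)" "g \<in> set_mult BG (AN M) (AN N')"
  shows "g \<in> AN M"
proof -
  obtain a b where ab: "a \<in> AN M" "b \<in> AN N" "g = a \<otimes>\<^bsub>BG\<^esub> b" using g(1) unfolding set_mult_def by auto
  obtain a' b' where ab': "a' \<in> AN M" "b' \<in> AN N'" "g = a' \<otimes>\<^bsub>BG\<^esub> b'" using g(2) unfolding set_mult_def by auto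
  have aG: "a \<in> G" and bG: "b \<in> G" and a'G: "a' \<in> G" and b'G: "b' \<in> G" using ab ab' AN_G by auto
  have NL: "N \<in> L" and yN: "y \<in> N" using LY_line[OF N] LY_y[OF N] .
  have N'L: "N' \<in> L" and yN': "y \<in> N'" using LY_line[OF N'] LY_y[OF N'] .
  define c where "c = inv\<^bsub>BG\<^esub> a' \<otimes>\<^bsub>BG\<^esub> a"
  have cA: "c \<in> AN M" unfolding c_def
    using subgroup.m_closed[OF AN_sub[OF M(1)]] subgroup.m_inv_closed[OF AN_sub[OF M(1)]] ab ab' by blast
  have cG: "c \<in> G" using cA AN_G by auto
  have "c \<otimes>\<^bsub>BG\<^esub> b = inv\<^bsub>BG\<^esub> a' \<otimes>\<^bsub>BG\<^esub> g"
    unfolding c_def ab(3) using monoid.m_assoc[OF mon group.inv_closed[OF grp G_carr[OF a'G]] G_carr[OF aG] G_carr[OF bG]] by simp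
  also have "\<dots> = b'" unfolding ab'(3)
    using group.cancel2[OF grp G_carr[OF a'G] G_carr[OF b'G]] by simp
  finally have cb: "c \<otimes>\<^bsub>BG\<^esub> b = b'" .
  have b'y: "b' y = c (b y)" using mult_app[OF G_Bij[OF cG] G_Bij[OF bG] y(1)] cb by simp
  have byN: "b y \<in> N" using AN_char[OF NL yN] ab(2) by auto
  have b'yN': "b' y \<in> N'" using AN_char[OF N'L yN'] ab'(2) by auto
  have cyM: "c y \<in> M" using AN_char[OF M] cA by auto
  show ?thesis
  proof (cases "c y = y")
    case True
    then have "c = \<one>\<^bsub>BG\<^esub>" using reg_one cG by blast
    then have "b = b'" using cb monoid.l_one[OF mon G_carr[OF bG]] by simp
    then have "b y \<in> N'" using b'yN' by simp
    have "b y = y"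
    proof (rule ccontr)
      assume "b y \<noteq> y"
      then have "N = N'" using two_lines[OF NL N'L _ byN yN \<open>b y \<in> N'\<close> yN'] by blast
      then show False using ne by simp
    qed
    then have "b = \<one>\<^bsub>BG\<^esub>" using reg_one bG by blast
    then show ?thesis using ab r_one_G[OF aG] by simp
  next
    case False
    have cN: "c ` N \<in> L" using G_line[OF cG NL] .
    have b'ycN: "b' y \<in> c ` N" using b'y byN by simp
    have cycN: "c y \<in> c ` N" using yN by simp
    have b'yP: "b' y \<in> P" using b'yN' L_sub[OF N'L] by auto
    show ?thesis
    proof (cases "b' y \<in> M")
      case True
      have "b' y = y"
      proof (rule ccontr)
        assume "b' y \<noteq> y"
        then have "M = N'" using two_lines[OF M(1) N'L _ True M(2) b'yN' yN'] by blast
        then show False using LY_M[OF N'] by simp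
      qed
      then have "b' = \<one>\<^bsub>BG\<^esub>" using reg_one b'G by blast
      then show ?thesis using ab' r_one_G[OF a'G] by simp
    next
      case notM: False
      have c1: "collinear L (b' y) y" using coll_line[OF N'L b'yN' yN'] .
      have c2: "collinear L (b' y) (c y)" using coll_line[OF cN b'ycN cycN] .
      have "y = c y" using gq_uniq[OF M(1) b'yP notM M(2) cyM c1 c2] .
      then show ?thesis using False by (metis)
    qed
  qed
qed

lemma finLY: "finite LY" unfolding LY_def using finL by auto

lemma card_LY: "card LY = t"
proof -
  have "LY = {l\<in>L. y \<in> l} - {M}" unfolding LY_def by auto
  moreover have "card {l\<in>L. y \<in> l} = t + 1" using deg[OF y(1)] .
  moreover have "M \<in> {l\<in>L. y \<in> l}" using M by auto
  moreover have "finite {l\<in>L. y \<in> l}" using finL by auto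
  ultimately show ?thesis by simp
qed

end

context egq_setup begin

lemma AM_sub: "subgroup (AN M) BG" using AN_sub[OF M(1)] .

lemma one_AN: "N \<in> L \<Longrightarrow> \<one>\<^bsub>BG\<^esub> \<in> AN N" using subgroup.one_closed[OF AN_sub] by blast

lemma card_Sn:
  assumes K: "subgroup K BG" and N: "N \<in> LY"
  shows "card (set_mult BG (AN M) (K \<inter> AN N)) = s * card (K \<inter> AN N)"
proof -
  have NL: "N \<in> L" and yN: "y \<in> N" using LY_line[OF N] LY_y[OF N] .
  have H: "subgroup (K \<inter> AN N) BG" using group.subgroups_Inter_pair[OF grp K AN_sub[OF NL]] .
  have fA: "finite (AN M)" using finG AN_G finite_subset by blast
  have fH: "finite (K \<inter> AN N)" using finG AN_G finite_subset by blast
  have I: "AN M \<inter> (K \<inter> AN N) = {\<one>\<^bsub>BG\<^esub>}"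
  proof
    show "AN M \<inter> (K \<inter> AN N) \<subseteq> {\<one>\<^bsub>BG\<^esub>}" using inter_trivial[OF N] by blast
    show "{\<one>\<^bsub>BG\<^esub>} \<subseteq> AN M \<inter> (K \<inter> AN N)"
      using one_AN[OF M(1)] one_AN[OF NL] subgroup.one_closed[OF K] by blast
  qed
  have "card (AN M) * card (K \<inter> AN N) = card (AN M \<inter> (K \<inter> AN N)) * card (set_mult BG (AN M) (K \<inter> AN N))"
    by (rule group.prod_card[OF grp AM_sub H fA fH])
  then show ?thesis unfolding I using card_AN[OF M] by simp
qed

lemma countK:
  assumes K: "subgroup K BG" and AK: "AN M \<subseteq> K" and KG: "K \<subseteq> G"
  shows "card K + t * s = card (K \<inter> Ast) + s * (\<Sum>N\<in>LY. card (K \<inter> AN N))"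
proof -
  define Sn where "Sn N = set_mult BG (AN M) (K \<inter> AN N) - AN M" for N
  have Sn_sub: "Sn N \<subseteq> set_mult BG (AN M) (AN N)" for N
    unfolding Sn_def set_mult_def by blast
  have Sn_K: "Sn N \<subseteq> K" for N
    unfolding Sn_def using group.set_mult_sub_closed[OF grp K, of "AN M" "K \<inter> AN N"] AK by blast
  have decomp: "K = (K \<inter> Ast) \<union> (\<Union>N\<in>LY. Sn N)"
  proof
    show "K \<subseteq> (K \<inter> Ast) \<union> (\<Union>N\<in>LY. Sn N)"
    proof
      fix k assume k: "k \<in> K"
      have kG: "k \<in> G" using k KG by blast
      show "k \<in> (K \<inter> Ast) \<union> (\<Union>N\<in>LY. Sn N)"
      proof (cases "k \<in> Ast")
        case True then show ?thesis using k by blast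
      next
        case False
        then obtain N where N: "N \<in> LY" "k \<in> set_mult BG (AN M) (AN N)" using cover[OF kG] by blast
        then obtain a b where ab: "a \<in> AN M" "b \<in> AN N" "k = a \<otimes>\<^bsub>BG\<^esub> b" unfolding set_mult_def by blast
        have aG: "a \<in> G" and bG: "b \<in> G" using ab AN_G by auto
        have "inv\<^bsub>BG\<^esub> a \<otimes>\<^bsub>BG\<^esub> k = b"
          using ab(3) group.cancel2[OF grp G_carr[OF aG] G_carr[OF bG]] by simp
        moreover have "inv\<^bsub>BG\<^esub> a \<otimes>\<^bsub>BG\<^esub> k \<in> K"
          using subgroup.m_closed[OF K] subgroup.m_inv_closed[OF K] AK ab(1) k by blast
        ultimately have "b \<in> K \<inter> AN N" using ab(2) by simp
        then have "k \<in> set_mult BG (AN M) (K \<inter> AN N)" using ab(1,3) unfolding set_mult_def by blast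
        moreover have "k \<notin> AN M" using False A_sub_Ast by blast
        ultimately have "k \<in> Sn N" unfolding Sn_def by blast
        then show ?thesis using N(1) by blast
      qed
    qed
    show "(K \<inter> Ast) \<union> (\<Union>N\<in>LY. Sn N) \<subseteq> K" using Sn_K by blast
  qed
  have fK: "finite K" using finG KG finite_subset by blast
  have fSn: "finite (Sn N)" for N using fK Sn_K finite_subset by blast
  have d1: "(K \<inter> Ast) \<inter> (\<Union>N\<in>LY. Sn N) = {}"
  proof -
    have "(K \<inter> Ast) \<inter> Sn N = {}" if N: "N \<in> LY" for N
      using disj3[OF N] Sn_sub[of N] unfolding Sn_def by blast
    then show ?thesis by blast
  qed
  have d2: "\<forall>N\<in>LY. \<forall>N'\<in>LY. N \<noteq> N' \<longrightarrow> Sn N \<inter> Sn N' = {}"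
  proof (intro ballI impI)
    fix N N' assume N: "N \<in> LY" and N': "N' \<in> LY" and ne: "N \<noteq> N'"
    show "Sn N \<inter> Sn N' = {}"
      using disj4[OF N N' ne] Sn_sub[of N] Sn_sub[of N'] unfolding Sn_def by blast
  qed
  have "card K = card (K \<inter> Ast) + card (\<Union>N\<in>LY. Sn N)"
    using card_Un_disjoint[OF _ _ d1] fK decomp fSn finLY
    by (metis finite_Int finite_UN_I)
  also have "card (\<Union>N\<in>LY. Sn N) = (\<Sum>N\<in>LY. card (Sn N))"
    using card_UN_disjoint[OF finLY _ d2] fSn by blast
  also have "\<dots> = (\<Sum>N\<in>LY. s * card (K \<inter> AN N) - s)"
  proof (rule sum.cong[OF refl])
    fix N assume N: "N \<in> LY"
    have sub: "AN M \<subseteq> set_mult BG (AN M) (K \<inter> AN N)"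
    proof
      fix a assume a: "a \<in> AN M"
      have "a \<otimes>\<^bsub>BG\<^esub> \<one>\<^bsub>BG\<^esub> = a" using r_one_G a AN_G by blast
      moreover have "\<one>\<^bsub>BG\<^esub> \<in> K \<inter> AN N" using one_AN[OF LY_line[OF N]] subgroup.one_closed[OF K] by blast
      ultimately show "a \<in> set_mult BG (AN M) (K \<inter> AN N)" using a unfolding set_mult_def by force
    qed
    have fin: "finite (set_mult BG (AN M) (K \<inter> AN N))"
      using fK AK group.set_mult_sub_closed[OF grp K, of "AN M" "K \<inter> AN N"] finite_subset by blast
    show "card (Sn N) = s * card (K \<inter> AN N) - s"
      unfolding Sn_def card_Diff_subset[OF finite_subset[OF sub fin] sub] card_Sn[OF K N] card_AN[OF M] ..
  qed
  finally have e1: "card K = card (K \<inter> Ast) + (\<Sum>N\<in>LY. s * card (K \<inter> AN N) - s)" .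
  have ge: "s * card (K \<inter> AN N) \<ge> s" if N: "N \<in> LY" for N
  proof -
    have "\<one>\<^bsub>BG\<^esub> \<in> K \<inter> AN N" using one_AN[OF LY_line[OF N]] subgroup.one_closed[OF K] by blast
    moreover have "finite (K \<inter> AN N)" using fK by simp
    ultimately have "card (K \<inter> AN N) \<ge> 1"
      by (metis card_0_eq empty_iff less_one not_le)
    then show ?thesis by simp
  qed
  have "(\<Sum>N\<in>LY. s * card (K \<inter> AN N) - s) + t * s = (\<Sum>N\<in>LY. s * card (K \<inter> AN N) - s) + (\<Sum>N\<in>LY. s)"
    using card_LY by simp
  also have "\<dots> = (\<Sum>N\<in>LY. s * card (K \<inter> AN N) - s + s)" by (simp add: sum.distrib)
  also have "\<dots> = (\<Sum>N\<in>LY. s * card (K \<inter> AN N))" using ge by (intro sum.cong) auto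
  also have "\<dots> = s * (\<Sum>N\<in>LY. card (K \<inter> AN N))" by (simp add: sum_distrib_left)
  finally show ?thesis using e1 by simp
qed

definition Dg where "Dg = derived BG G"

lemma G_carrier: "G \<subseteq> carrier BG" using subgroup.subset[OF sub] .
lemma D_sub: "subgroup Dg BG" unfolding Dg_def using group.derived_is_subgroup[OF grp G_carrier] .
lemma D_G: "Dg \<subseteq> G" unfolding Dg_def using group.derived_incl[OF grp subset_refl sub] .

lemma conj_in:
  assumes H: "subgroup H BG" "Dg \<subseteq> H" "H \<subseteq> G" and g: "g \<in> G" and h: "h \<in> H"
  shows "g \<otimes>\<^bsub>BG\<^esub> h \<otimes>\<^bsub>BG\<^esub> inv\<^bsub>BG\<^esub> g \<in> H"
proof -
  have hG: "h \<in> G" using h H(3) by blast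
  have "g \<otimes>\<^bsub>BG\<^esub> h \<otimes>\<^bsub>BG\<^esub> inv\<^bsub>BG\<^esub> g \<otimes>\<^bsub>BG\<^esub> inv\<^bsub>BG\<^esub> h \<in> derived_set BG G"
    using g hG by blast
  then have c: "g \<otimes>\<^bsub>BG\<^esub> h \<otimes>\<^bsub>BG\<^esub> inv\<^bsub>BG\<^esub> g \<otimes>\<^bsub>BG\<^esub> inv\<^bsub>BG\<^esub> h \<in> H"
    using H(2) unfolding Dg_def derived_def by (blast intro: generate.incl)
  have "g \<otimes>\<^bsub>BG\<^esub> h \<otimes>\<^bsub>BG\<^esub> inv\<^bsub>BG\<^esub> g \<otimes>\<^bsub>BG\<^esub> inv\<^bsub>BG\<^esub> h \<otimes>\<^bsub>BG\<^esub> h \<in> H"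
    using subgroup.m_closed[OF H(1) c h] .
  moreover have "g \<otimes>\<^bsub>BG\<^esub> h \<otimes>\<^bsub>BG\<^esub> inv\<^bsub>BG\<^esub> g \<otimes>\<^bsub>BG\<^esub> inv\<^bsub>BG\<^esub> h \<otimes>\<^bsub>BG\<^esub> h = g \<otimes>\<^bsub>BG\<^esub> h \<otimes>\<^bsub>BG\<^esub> inv\<^bsub>BG\<^esub> g"
  proof (rule group.cancel3[OF grp])
    show "h \<in> carrier BG" using G_carr[OF hG] .
    show "g \<otimes>\<^bsub>BG\<^esub> h \<otimes>\<^bsub>BG\<^esub> inv\<^bsub>BG\<^esub> g \<in> carrier BG"
      using G_carr[OF G_mult[OF G_mult[OF g hG] G_inv[OF g]]] .
  qed
  ultimately show ?thesis by simp
qed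

lemma set_mult_G: "S1 \<subseteq> G \<Longrightarrow> S2 \<subseteq> G \<Longrightarrow> set_mult BG S1 S2 \<subseteq> G"
  using group.set_mult_sub_closed[OF grp sub] by blast

lemma in_mult_one_r: "a \<in> S1 \<Longrightarrow> a \<in> G \<Longrightarrow> \<one>\<^bsub>BG\<^esub> \<in> S2 \<Longrightarrow> a \<in> set_mult BG S1 S2"
  using in_set_mult[of a S1 "\<one>\<^bsub>BG\<^esub>" S2] r_one_G by simp

lemma in_mult_one_l: "b \<in> S2 \<Longrightarrow> b \<in> G \<Longrightarrow> \<one>\<^bsub>BG\<^esub> \<in> S1 \<Longrightarrow> b \<in> set_mult BG S1 S2"
  using in_set_mult[of "\<one>\<^bsub>BG\<^esub>" S1 b S2] monoid.l_one[OF mon G_carr[of b]] by simp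

lemma prod_sub:
  assumes Q: "subgroup Q BG" "Q \<subseteq> G" and H: "subgroup H BG" "Dg \<subseteq> H" "H \<subseteq> G"
  shows "subgroup (set_mult BG Q H) BG"
proof (rule group.subgroupI[OF grp])
  show "set_mult BG Q H \<subseteq> carrier BG" using set_mult_G[OF Q(2) H(3)] G_carrier by blast
  show "set_mult BG Q H \<noteq> {}"
    using in_set_mult[OF subgroup.one_closed[OF Q(1)] subgroup.one_closed[OF H(1)]] by blast
next
  fix k assume "k \<in> set_mult BG Q H"
  then obtain x h where xh: "x \<in> Q" "h \<in> H" "k = x \<otimes>\<^bsub>BG\<^esub> h" unfolding set_mult_def by blast
  have xG: "x \<in> G" and hG: "h \<in> G" using xh Q(2) H(3) by auto
  have e: "inv\<^bsub>BG\<^esub> k = inv\<^bsub>BG\<^esub> x \<otimes>\<^bsub>BG\<^esub> (x \<otimes>\<^bsub>BG\<^esub> inv\<^bsub>BG\<^esub> h \<otimes>\<^bsub>BG\<^esub> inv\<^bsub>BG\<^esub> x)"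
    unfolding xh(3) by (rule group.alg_inv[OF grp G_carr[OF xG] G_carr[OF hG]])
  have "x \<otimes>\<^bsub>BG\<^esub> inv\<^bsub>BG\<^esub> h \<otimes>\<^bsub>BG\<^esub> inv\<^bsub>BG\<^esub> x \<in> H"
    using conj_in[OF H xG subgroup.m_inv_closed[OF H(1) xh(2)]] .
  moreover have "inv\<^bsub>BG\<^esub> x \<in> Q" using subgroup.m_inv_closed[OF Q(1) xh(1)] .
  ultimately show "inv\<^bsub>BG\<^esub> k \<in> set_mult BG Q H" unfolding e by (rule in_set_mult[rotated])
next
  fix k1 k2 assume "k1 \<in> set_mult BG Q H" "k2 \<in> set_mult BG Q H"
  then obtain x1 h1 x2 h2 where xh: "x1 \<in> Q" "h1 \<in> H" "k1 = x1 \<otimes>\<^bsub>BG\<^esub> h1"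
    "x2 \<in> Q" "h2 \<in> H" "k2 = x2 \<otimes>\<^bsub>BG\<^esub> h2" unfolding set_mult_def by blast
  have G4: "x1 \<in> G" "h1 \<in> G" "x2 \<in> G" "h2 \<in> G" using xh Q(2) H(3) by auto
  have e: "k1 \<otimes>\<^bsub>BG\<^esub> k2 = x1 \<otimes>\<^bsub>BG\<^esub> x2 \<otimes>\<^bsub>BG\<^esub> (inv\<^bsub>BG\<^esub> x2 \<otimes>\<^bsub>BG\<^esub> h1 \<otimes>\<^bsub>BG\<^esub> x2 \<otimes>\<^bsub>BG\<^esub> h2)"
    unfolding xh(3,6) by (rule group.alg_mult[OF grp G_carr[OF G4(1)] G_carr[OF G4(2)] G_carr[OF G4(3)] G_carr[OF G4(4)]])
  have "inv\<^bsub>BG\<^esub> x2 \<otimes>\<^bsub>BG\<^esub> h1 \<otimes>\<^bsub>BG\<^esub> inv\<^bsub>BG\<^esub> (inv\<^bsub>BG\<^esub> x2) \<in> H"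
    using conj_in[OF H G_inv[OF G4(3)] xh(2)] .
  then have "inv\<^bsub>BG\<^esub> x2 \<otimes>\<^bsub>BG\<^esub> h1 \<otimes>\<^bsub>BG\<^esub> x2 \<in> H"
    using group.inv_inv[OF grp G_carr[OF G4(3)]] by simp
  then have "inv\<^bsub>BG\<^esub> x2 \<otimes>\<^bsub>BG\<^esub> h1 \<otimes>\<^bsub>BG\<^esub> x2 \<otimes>\<^bsub>BG\<^esub> h2 \<in> H"
    using subgroup.m_closed[OF H(1) _ xh(5)] by blast
  moreover have "x1 \<otimes>\<^bsub>BG\<^esub> x2 \<in> Q" using subgroup.m_closed[OF Q(1) xh(1) xh(4)] .
  ultimately show "k1 \<otimes>\<^bsub>BG\<^esub> k2 \<in> set_mult BG Q H" unfolding e by (rule in_set_mult[rotated])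
qed

lemma main:
  assumes ndvd: "\<not> s dvd t"
  shows "set_mult BG Ast Dg = set_mult BG (AN M) Dg"
proof (rule ccontr)
  assume neq: "set_mult BG Ast Dg \<noteq> set_mult BG (AN M) Dg"
  define N0 where "N0 = set_mult BG (AN M) Dg"
  have N0sub: "subgroup N0 BG" unfolding N0_def using prod_sub[OF AM_sub AN_G D_sub subset_refl D_G] .
  have N0G: "N0 \<subseteq> G" unfolding N0_def using set_mult_G[OF AN_G D_G] .
  have A_N0: "AN M \<subseteq> N0" unfolding N0_def
    using in_mult_one_r[of _ "AN M" Dg] subgroup.one_closed[OF D_sub] AN_G by blast
  have D_N0: "Dg \<subseteq> N0" unfolding N0_def
    using in_mult_one_l[of _ Dg "AN M"] one_AN[OF M(1)] D_G by blast
  have nsub: "\<not> Ast \<subseteq> N0"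
  proof
    assume AN0: "Ast \<subseteq> N0"
    have "set_mult BG Ast Dg \<subseteq> N0"
      using group.set_mult_sub_closed[OF grp N0sub AN0 D_N0] .
    moreover have "N0 \<subseteq> set_mult BG Ast Dg" unfolding N0_def using A_sub_Ast unfolding set_mult_def by blast
    ultimately show False using neq unfolding N0_def by blast
  qed
  define F where "F = {H. subgroup H BG \<and> H \<subseteq> G \<and> N0 \<subseteq> H \<and> \<not> Ast \<subseteq> H}"
  have finF: "finite F"
  proof -
    have "F \<subseteq> Pow G" unfolding F_def by blast
    moreover have "finite (Pow G)" using finG by simp
    ultimately show ?thesis by (rule finite_subset)
  qed
  have N0F: "N0 \<in> F" unfolding F_def using N0sub N0G nsub by blast
  obtain H where HF: "H \<in> F" and Hmax: "\<forall>B\<in>F. H \<subseteq> B \<longrightarrow> H = B"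
    using finite_has_maximal2[OF finF N0F] by blast
  have Hsub: "subgroup H BG" and HG: "H \<subseteq> G" and N0H: "N0 \<subseteq> H" and nAH: "\<not> Ast \<subseteq> H"
    using HF unfolding F_def by auto
  have DH: "Dg \<subseteq> H" using D_N0 N0H by blast
  have AH: "AN M \<subseteq> H" using A_N0 N0H by blast
  define H1 where "H1 = set_mult BG Ast H"
  have H1sub: "subgroup H1 BG" unfolding H1_def using prod_sub[OF Ast_sub Ast_G Hsub DH HG] .
  have H1G: "H1 \<subseteq> G" unfolding H1_def using set_mult_G[OF Ast_G HG] .
  have H_H1: "H \<subseteq> H1" unfolding H1_def
    using in_mult_one_l[of _ H Ast] subgroup.one_closed[OF Ast_sub] HG by blast
  have Ast_H1: "Ast \<subseteq> H1" unfolding H1_def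
    using in_mult_one_r[of _ Ast H] subgroup.one_closed[OF Hsub] Ast_G by blast
  have finH1: "finite H1" using finG H1G finite_subset by blast
  have key: "card (Q \<inter> H1) * card H = card (Q \<inter> H) * card H1"
    if Q: "subgroup Q BG" "Q \<subseteq> G" and nQ: "\<not> Q \<subseteq> H" for Q
  proof -
    define QH where "QH = set_mult BG Q H"
    have QHsub: "subgroup QH BG" unfolding QH_def using prod_sub[OF Q Hsub DH HG] .
    have QHG: "QH \<subseteq> G" unfolding QH_def using set_mult_G[OF Q(2) HG] .
    have H_QH: "H \<subseteq> QH" unfolding QH_def
      using in_mult_one_l[of _ H Q] subgroup.one_closed[OF Q(1)] HG by blast
    have Q_QH: "Q \<subseteq> QH" unfolding QH_def
      using in_mult_one_r[of _ Q H] subgroup.one_closed[OF Hsub] Q(2) by blast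
    have Ast_QH: "Ast \<subseteq> QH"
    proof (rule ccontr)
      assume "\<not> Ast \<subseteq> QH"
      then have "QH \<in> F" unfolding F_def using QHsub QHG N0H H_QH by blast
      then have "H = QH" using Hmax H_QH by blast
      then show False using Q_QH nQ by blast
    qed
    have H1_QH: "H1 \<subseteq> QH" unfolding H1_def using group.set_mult_sub_closed[OF grp QHsub Ast_QH H_QH] .
    have "H1 \<subseteq> set_mult BG Q H" using H1_QH unfolding QH_def .
    from group.dedekind_count[OF grp Q(1) Hsub H1sub H_H1 this finH1] show ?thesis .
  qed
  define h where "h = card H"
  define h1 where "h1 = card H1"
  define a where "a = card (H \<inter> Ast)"
  define a1 where "a1 = card (H1 \<inter> Ast)"
  define c where "c N = card (H \<inter> AN N)" for N
  define c1 where "c1 N = card (H1 \<inter> AN N)" for N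
  have E0: "h + t * s = a + s * (\<Sum>N\<in>LY. c N)"
    unfolding h_def a_def c_def using countK[OF Hsub AH HG] .
  have E1: "h1 + t * s = a1 + s * (\<Sum>N\<in>LY. c1 N)"
    unfolding h1_def a1_def c1_def using countK[OF H1sub _ H1G] AH H_H1 by blast
  have cA: "a1 * h = a * h1"
    using key[OF Ast_sub Ast_G nAH] unfolding a1_def a_def h_def h1_def by (simp add: Int_commute)
  have hlt: "h < h1"
  proof -
    have "H \<subset> H1" using H_H1 Ast_H1 nAH by blast
    then show ?thesis unfolding h_def h1_def by (rule psubset_card_mono[OF finH1])
  qed
  define S1 where "S1 = {N\<in>LY. AN N \<subseteq> H}"
  define f where "f N = int h1 * int (c N) - int h * int (c1 N)" for N
  have fN: "f N = (if N \<in> S1 then (int h1 - int h) * int s else 0)" if N: "N \<in> LY" for N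
  proof (cases "AN N \<subseteq> H")
    case True
    then have "H \<inter> AN N = AN N" "H1 \<inter> AN N = AN N" using H_H1 by blast+
    then have "c N = s" "c1 N = s" unfolding c_def c1_def using card_AN[OF LY_line[OF N] LY_y[OF N]] by simp_all
    then show ?thesis unfolding f_def S1_def using True N by (simp add: algebra_simps)
  next
    case False
    have "card (AN N \<inter> H1) * card H = card (AN N \<inter> H) * card H1"
      using key[OF AN_sub[OF LY_line[OF N]] AN_G False] .
    then have "c1 N * h = c N * h1" unfolding c_def c1_def h_def h1_def by (simp add: Int_commute)
    then have "int (c1 N) * int h = int (c N) * int h1" by (metis of_nat_mult)
    then show ?thesis unfolding f_def S1_def using False by (simp add: algebra_simps)
  qed
  have sumf: "(\<Sum>N\<in>LY. f N) = (int h1 - int h) * int s * int (card S1)"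
  proof -
    have "(\<Sum>N\<in>LY. f N) = (\<Sum>N\<in>LY. if N \<in> S1 then (int h1 - int h) * int s else 0)"
      using fN by (rule sum.cong[OF refl])
    also have "\<dots> = (\<Sum>N\<in>LY \<inter> S1. (int h1 - int h) * int s)"
      using sum.inter_restrict[OF finLY, of "\<lambda>_. (int h1 - int h) * int s" S1] by simp
    also have "LY \<inter> S1 = S1" unfolding S1_def by blast
    finally show ?thesis by simp
  qed
  have E0': "int h + int t * int s = int a + int s * (\<Sum>N\<in>LY. int (c N))"
    using arg_cong[OF E0, of int] by (simp add: of_nat_sum)
  have E1': "int h1 + int t * int s = int a1 + int s * (\<Sum>N\<in>LY. int (c1 N))"
    using arg_cong[OF E1, of int] by (simp add: of_nat_sum)
  have cA': "int a1 * int h = int a * int h1" using arg_cong[OF cA, of int] by simp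
  have "int s * (\<Sum>N\<in>LY. f N) = int h1 * (int s * (\<Sum>N\<in>LY. int (c N))) - int h * (int s * (\<Sum>N\<in>LY. int (c1 N)))"
    unfolding f_def by (simp add: sum_subtractf sum_distrib_left algebra_simps)
  also have "\<dots> = int h1 * (int h + int t * int s - int a) - int h * (int h1 + int t * int s - int a1)"
    using E0' E1' by (simp add: algebra_simps)
  also have "\<dots> = int t * int s * (int h1 - int h) + (int a1 * int h - int a * int h1)"
    by (simp add: algebra_simps)
  also have "\<dots> = int t * int s * (int h1 - int h)" using cA' by simp
  finally have "int t * (int s * (int h1 - int h)) = (int s * int (card S1)) * (int s * (int h1 - int h))"
    unfolding sumf by (simp add: algebra_simps)
  moreover have "int s * (int h1 - int h) \<noteq> 0" using s1 hlt by simp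
  ultimately have "int t = int s * int (card S1)" by simp
  then have "t = s * card S1" by (metis of_nat_eq_iff of_nat_mult)
  then show False using ndvd by simp
qed

end

theorem corollary2p5:
  fixes P :: "'p set" and L :: "'p set set" and s t :: nat
    and p :: 'p and G :: "('p \<Rightarrow> 'p) set"
  assumes egq: "is_EGQ P L s t p G"
    and ndvd: "\<not> s dvd t"
    and y: "y \<in> P" "\<not> collinear L p y"
    and M: "M \<in> L" "y \<in> M"
    and z: "z \<in> M" "collinear L p z"
  shows "{g \<in> G. g z = z} <#>\<^bsub>BijGroup P\<^esub> derived (BijGroup P) G
       = {g \<in> G. g ` M = M} <#>\<^bsub>BijGroup P\<^esub> derived (BijGroup P) G"
proof -
  interpret E: egq_setup P L s t p G y M z
    using egq y M z by (unfold_locales)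
  show ?thesis using E.main[OF ndvd] unfolding E.Ast_def E.AN_def E.Dg_def .
qed

end
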